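(* Let $A$ be a commutative ring and let $(x_0,\ldots,x_n)$ be a path in $Y(A)$. Let $X\in\mathrm{SL}_2(A)$ with $\infty\cdot X=x_0$ and let $Y\in\mathrm{SL}_2(A)$ be such that $Z:=XY^{-1}\in B$, say $Z=\begin{pmatrix}u&0\\c&u^{-1}\end{pmatrix}$. Let $a_1,\ldots,a_n\in A$ be the elements with $x_i=\infty\cdot E(a_i)\cdots E(a_1)X$ for $1\le i\le n$, and let $b_1,\ldots,b_n\in A$ be the elements with $x_i=\infty\cdot E(b_i)\cdots E(b_1)Y$ for $1\le i\le n$. Then $b_1=u^2a_1+cu$ and $b_i=u^{2(-1)^{i-1}}a_i$ for all $i\ge2$.
   Context: A unimodular row over $A$ is $(a,b)\in A^2$ with $aA+bA=A$. $\Gamma(A)$ is the graph whose vertices are classes of unimodular rows modulo multiplication by units, with $\{[u],[v]\}$ an edge iff the matrix with rows $u,v$ lies in $\mathrm{GL}_2(A)$; $Y(A)$ is its clique complex, and a path is a sequence of vertices with consecutive ones adjacent. $\mathrm{SL}_2(A)$ acts on vertices on the right by $[u]\cdot M=[uM]$; $\infty=[(1,0)]$. $E(a)=\begin{pmatrix}a&1\\-1&0\end{pmatrix}$. $B$ is the group of lower triangular matrices in $\mathrm{SL}_2(A)$. (For a path and a matrix $X$ with $\infty\cdot X=x_0$, the elements $a_i$ with $x_i=\infty\cdot E(a_i)\cdots E(a_1)X$ exist and are unique.) *)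

theory Defs
  imports "HOL-Analysis.Analysis"
begin

text \<open>Rows are elements of A^2, 2x2 matrices are elements of A^2^2 (rows indexed first);
  the right action of a matrix on a row is the library's vector-matrix product.\<close>

definition unimodular :: "'a::comm_ring_1 ^ 2 \<Rightarrow> bool" where
  "unimodular v \<longleftrightarrow> (\<exists>s t. v$1 * s + v$2 * t = 1)"

definition row_class :: "'a::comm_ring_1 ^ 2 \<Rightarrow> ('a ^ 2) set" where
  "row_class v = {w. \<exists>u. u dvd 1 \<and> w = u *s v}"

definition vertices :: "('a::comm_ring_1 ^ 2) set set" where
  "vertices = {row_class v | v. unimodular v}"

definition rows2 :: "'a::comm_ring_1 ^ 2 \<Rightarrow> 'a ^ 2 \<Rightarrow> 'a ^ 2 ^ 2" where
  "rows2 u v = (\<chi> i. if i = 1 then u else v)"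

definition in_GL2 :: "'a::comm_ring_1 ^ 2 ^ 2 \<Rightarrow> bool" where
  "in_GL2 M \<longleftrightarrow> det M dvd 1"

definition in_SL2 :: "'a::comm_ring_1 ^ 2 ^ 2 \<Rightarrow> bool" where
  "in_SL2 M \<longleftrightarrow> det M = 1"

text \<open>Adjacency in Gamma(A) (equivalently the 1-skeleton of Y(A)).\<close>
definition adjacent :: "('a::comm_ring_1 ^ 2) set \<Rightarrow> ('a ^ 2) set \<Rightarrow> bool" where
  "adjacent x y \<longleftrightarrow> x \<in> vertices \<and> y \<in> vertices \<and>
     (\<exists>u v. x = row_class u \<and> y = row_class v \<and> in_GL2 (rows2 u v))"

definition is_path :: "(nat \<Rightarrow> ('a::comm_ring_1 ^ 2) set) \<Rightarrow> nat \<Rightarrow> bool" where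
  "is_path x n \<longleftrightarrow> (\<forall>i\<le>n. x i \<in> vertices) \<and> (\<forall>i<n. adjacent (x i) (x (Suc i)))"

definition act :: "('a::comm_ring_1 ^ 2) set \<Rightarrow> 'a ^ 2 ^ 2 \<Rightarrow> ('a ^ 2) set" where
  "act x M = (\<Union>v\<in>x. row_class (v v* M))"

definition infty :: "('a::comm_ring_1 ^ 2) set" where
  "infty = row_class (vector [1, 0])"

definition Emat :: "'a::comm_ring_1 \<Rightarrow> 'a ^ 2 ^ 2" where
  "Emat a = vector [vector [a, 1], vector [-1, 0]]"

fun Eprod :: "(nat \<Rightarrow> 'a::comm_ring_1) \<Rightarrow> nat \<Rightarrow> 'a ^ 2 ^ 2" where
  "Eprod a 0 = mat 1"
| "Eprod a (Suc i) = Emat (a (Suc i)) ** Eprod a i"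

definition in_B :: "'a::comm_ring_1 ^ 2 ^ 2 \<Rightarrow> bool" where
  "in_B M \<longleftrightarrow> in_SL2 M \<and> M$1$2 = 0"

end

theory Submission
  imports Defs
begin

lemma e1_vm: "(vector [1, 0] :: 'a::comm_ring_1^2) v* M = M$1"
  by (simp add: vec_eq_iff vector_matrix_mult_def sum_2)

lemma smult_vm: "((t::'a::comm_ring_1) *s v) v* M = t *s (v v* M)"
  by (simp add: vec_eq_iff vector_matrix_mult_def sum_distrib_left algebra_simps)

lemma act_infty_eq:
  fixes M N :: "'a::comm_ring_1^2^2"
  assumes "act infty M = act infty N"
  shows "\<exists>s. N$1 = s *s M$1"
proof -
  have "vector [1, 0] \<in> (infty :: ('a^2) set)"
    unfolding infty_def row_class_def by (auto intro!: exI[of _ 1])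
  moreover have "N$1 \<in> row_class (vector [1, 0] v* N)"
    unfolding e1_vm row_class_def by (auto intro!: exI[of _ 1])
  ultimately have "N$1 \<in> act infty N" unfolding act_def by blast
  then have "N$1 \<in> act infty M" using assms by simp
  then obtain v w where v: "v \<in> infty" and w: "w dvd 1" "N$1 = w *s (v v* M)"
    unfolding act_def row_class_def by blast
  from v obtain t where t: "v = t *s vector [1, 0]"
    unfolding infty_def row_class_def by blast
  have "N$1 = (w * t) *s M$1" using w t by (simp add: smult_vm e1_vm)
  then show ?thesis by blast
qed

lemma indep2:
  fixes M :: "'a::comm_ring_1^2^2"
  assumes "det M = 1" "\<alpha> *s M$1 + \<beta> *s M$2 = 0"
  shows "\<alpha> = 0 \<and> \<beta> = 0"
proof -
  have d: "M$1$1 * M$2$2 - M$1$2 * M$2$1 = 1" using assms(1) by (simp add: det_2)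
  have e1: "\<alpha> * M$1$1 + \<beta> * M$2$1 = 0" and e2: "\<alpha> * M$1$2 + \<beta> * M$2$2 = 0"
    using assms(2) by (auto simp: vec_eq_iff forall_2)
  have "\<alpha> = \<alpha> * (M$1$1 * M$2$2 - M$1$2 * M$2$1)" using d by simp
  also have "\<dots> = M$2$2 * (\<alpha> * M$1$1 + \<beta> * M$2$1) - M$2$1 * (\<alpha> * M$1$2 + \<beta> * M$2$2)"
    by (simp add: algebra_simps)
  finally have a0: "\<alpha> = 0" using e1 e2 by simp
  have "\<beta> = \<beta> * (M$1$1 * M$2$2 - M$1$2 * M$2$1)" using d by simp
  also have "\<dots> = M$1$1 * (\<alpha> * M$1$2 + \<beta> * M$2$2) - M$1$2 * (\<alpha> * M$1$1 + \<beta> * M$2$1)"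
    by (simp add: algebra_simps)
  finally have "\<beta> = 0" using e1 e2 by simp
  with a0 show ?thesis by simp
qed

definition diag2 :: "'a::comm_ring_1 \<Rightarrow> 'a \<Rightarrow> 'a^2^2" where
  "diag2 p q = (\<chi> i j. if i = j then (if i = 1 then p else q) else 0)"

lemma step:
  fixes M L :: "'a::comm_ring_1^2^2"
  assumes "det M = 1" "L$1$2 = 0" "L$1$1 * L$2$2 = 1"
    and "(Emat b ** L ** M)$1 = s *s (Emat a ** M)$1"
  shows "b = L$2$2 * (L$2$2 * a - L$2$1)"
    and "Emat b ** L = diag2 (L$2$2) (L$1$1) ** Emat a"
proof -
  have "(b * L$1$1 + L$2$1 - s * a) *s M$1 + (L$2$2 - s) *s M$2 = 0"
    using assms(4) assms(2)
    by (simp add: vec_eq_iff forall_2 matrix_matrix_mult_def sum_2 Emat_def algebra_simps)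
  from indep2[OF assms(1) this] have h: "b * L$1$1 + L$2$1 = L$2$2 * a"
    by (simp add: algebra_simps)
  have "b = L$2$2 * (b * L$1$1)" using assms(3) by (metis mult.assoc mult.commute mult_1_right)
  also have "b * L$1$1 = L$2$2 * a - L$2$1" using h by (simp add: algebra_simps)
  finally show "b = L$2$2 * (L$2$2 * a - L$2$1)" using h by (simp add: algebra_simps)
  show "Emat b ** L = diag2 (L$2$2) (L$1$1) ** Emat a"
    using h assms(2)
    by (simp add: vec_eq_iff forall_2 matrix_matrix_mult_def sum_2 Emat_def diag2_def algebra_simps)
qed

lemma det_Emat: "det (Emat a) = 1"
  by (simp add: det_2 Emat_def)

lemma det_Eprod: "det (Eprod a i) = 1"
  by (induction i) (auto simp: det_mul det_Emat)

lemma diag2_entries [simp]: "diag2 p q $1$1 = p" "diag2 p q $1$2 = 0"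
  "diag2 p q $2$1 = 0" "diag2 p q $2$2 = q"
  by (simp_all add: diag2_def)

theorem proposition5p1:
  fixes x :: "nat \<Rightarrow> ('a::comm_ring_1 ^ 2) set" and n :: nat
    and X Y Z :: "'a ^ 2 ^ 2" and u c :: 'a and a b :: "nat \<Rightarrow> 'a"
  assumes path: "is_path x n"
    and X: "in_SL2 X" and X0: "act infty X = x 0"
    and Y: "in_SL2 Y"
    and Z: "X = Z ** Y" and ZB: "in_B Z"
    and Zu: "Z$1$1 = u" and Zc: "Z$2$1 = c" and Zuinv: "Z$2$2 * u = 1"
    and a: "\<And>i. 1 \<le> i \<Longrightarrow> i \<le> n \<Longrightarrow> x i = act infty (Eprod a i ** X)"
    and b: "\<And>i. 1 \<le> i \<Longrightarrow> i \<le> n \<Longrightarrow> x i = act infty (Eprod b i ** Y)"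
  shows "(1 \<le> n \<longrightarrow> b 1 = u^2 * a 1 + c * u) \<and>
         (\<forall>i. 2 \<le> i \<and> i \<le> n \<longrightarrow>
            b i = (if even i then Z$2$2^2 else u^2) * a i)"
proof -
  define w where "w = Z$2$2"
  define Zi :: "'a^2^2" where "Zi = vector [vector [w, 0], vector [-c, u]]"
  define Lm where "Lm i = (if i = 0 then Zi else if even i then diag2 w u else diag2 u w)" for i :: nat
  have Z12: "Z$1$2 = 0" using ZB by (simp add: in_B_def)
  have wu: "w * u = 1" using Zuinv by (simp add: w_def)
  have ZiZ: "Zi ** Z = mat 1"
    using Z12 Zu Zc wu
    by (simp add: vec_eq_iff forall_2 matrix_matrix_mult_def sum_2 Zi_def mat_def w_def algebra_simps)
  have Y0: "Y = Zi ** X"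
    by (simp add: Z matrix_mul_assoc ZiZ)
  have detX: "det X = 1" using X by (simp add: in_SL2_def)
  have main: "i \<le> n \<Longrightarrow> Eprod b i ** Y = Lm i ** (Eprod a i ** X) \<and>
       (i \<ge> 1 \<longrightarrow> b i = (if i = 1 then u^2 * a 1 + c * u
          else (if even i then w^2 else u^2) * a i))" for i
  proof (induction i)
    case 0
    then show ?case using Y0 by (simp add: Lm_def)
  next
    case (Suc i)
    then have IH: "Eprod b i ** Y = Lm i ** (Eprod a i ** X)" by simp
    let ?M = "Eprod a i ** X"
    have dM: "det ?M = 1" by (simp add: det_mul det_Eprod detX)
    have L12: "Lm i $1$2 = 0" and L1122: "Lm i $1$1 * Lm i $2$2 = 1"
      using wu by (auto simp: Lm_def Zi_def mult.commute)
    have "act infty (Eprod a (Suc i) ** X) = act infty (Eprod b (Suc i) ** Y)"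
      using a[of "Suc i"] b[of "Suc i"] Suc.prems by simp
    then obtain s where "(Eprod b (Suc i) ** Y)$1 = s *s (Eprod a (Suc i) ** X)$1"
      using act_infty_eq by blast
    moreover have "Emat (b (Suc i)) ** Lm i ** ?M = Eprod b (Suc i) ** Y"
      using IH by (simp add: matrix_mul_assoc) (metis matrix_mul_assoc)
    moreover have "Emat (a (Suc i)) ** ?M = Eprod a (Suc i) ** X"
      by (simp add: matrix_mul_assoc)
    ultimately have hs: "(Emat (b (Suc i)) ** Lm i ** ?M)$1 = s *s (Emat (a (Suc i)) ** ?M)$1"
      by simp
    note st = step[OF dM L12 L1122 hs]
    have eq: "Eprod b (Suc i) ** Y = Lm (Suc i) ** (Eprod a (Suc i) ** X)"
    proof -
      have "Eprod b (Suc i) ** Y = (Emat (b (Suc i)) ** Lm i) ** ?M"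
        using IH by (simp add: matrix_mul_assoc) (metis matrix_mul_assoc)
      also have "\<dots> = diag2 (Lm i $2$2) (Lm i $1$1) ** (Emat (a (Suc i)) ** ?M)"
        using st(2) by (simp add: matrix_mul_assoc)
      also have "diag2 (Lm i $2$2) (Lm i $1$1) = Lm (Suc i)"
        by (auto simp: Lm_def Zi_def)
      finally show ?thesis by (simp add: matrix_mul_assoc)
    qed
    have "b (Suc i) = (if Suc i = 1 then u^2 * a 1 + c * u
          else (if even (Suc i) then w^2 else u^2) * a (Suc i))"
      using st(1) by (auto simp: Lm_def Zi_def power2_eq_square algebra_simps)
    with eq show ?case by simp
  qed
  show ?thesis
  proof (intro conjI allI impI)
    assume "1 \<le> n" then show "b 1 = u^2 * a 1 + c * u" using main[of 1] by simp
  next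
    fix i assume "2 \<le> i \<and> i \<le> n"
    then show "b i = (if even i then Z$2$2^2 else u^2) * a i"
      using main[of i] by (simp add: w_def)
  qed
qed

end
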